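(* Let $0<q<1$ and $t>0$, let $n\ge 0$ be an integer, and let $u\in\mathbb{C}\setminus\{0\}$. Then $$\left|S_n(q^{-nt}u;q)\right|\le \frac{|u|^n\,A_q\!\left(-\frac{q^{n(t-2)}}{|u|}\right)}{(q;q)_\infty\, q^{n^2(t-1)}}.$$
   Context: Notation: $(a;q)_0:=1$, $(a;q)_k:=\prod_{j=0}^{k-1}(1-aq^j)$, $(a;q)_\infty:=\prod_{j=0}^{\infty}(1-aq^j)$. Ramanujan's function is the entire function $A_q(z):=\sum_{k=0}^{\infty}\frac{q^{k^2}}{(q;q)_k}(-z)^k$. The Stieltjes–Wigert polynomials are $S_n(x;q):=\sum_{k=0}^{n}\frac{q^{k^2}(-x)^k}{(q;q)_k(q;q)_{n-k}}$. *)

theory Defs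
  imports "HOL-Analysis.Analysis"
begin

definition qpoch :: "real \<Rightarrow> real \<Rightarrow> nat \<Rightarrow> real" where
  "qpoch a q k = (\<Prod>j<k. (1 - a * q ^ j))"

definition qpoch_inf :: "real \<Rightarrow> real \<Rightarrow> real" where
  "qpoch_inf a q = (\<Prod>j. (1 - a * q ^ j))"

definition ramanujanA :: "real \<Rightarrow> 'a::{real_normed_field,banach} \<Rightarrow> 'a" where
  "ramanujanA q z = (\<Sum>k. of_real (q ^ (k\<^sup>2) / qpoch q q k) * (- z) ^ k)"

definition stieltjes_wigert :: "nat \<Rightarrow> 'a::real_normed_field \<Rightarrow> real \<Rightarrow> 'a" where
  "stieltjes_wigert n x q =
     (\<Sum>k=0..n. of_real (q ^ (k\<^sup>2) / (qpoch q q k * qpoch q q (n - k))) * (- x) ^ k)"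

end

theory Submission
  imports Defs
begin

lemma qq_lt1:
  assumes "0 < (q::real)" "q < 1"
  shows "q * q ^ j < 1"
proof -
  have "q ^ j \<le> 1" using assms by (intro power_le_one) auto
  then have "q * q ^ j \<le> q * 1" using assms by (intro mult_left_mono) auto
  then show ?thesis using assms(2) by linarith
qed

lemma qpoch_pos:
  assumes "0 < q" "q < 1"
  shows "qpoch q q k > 0"
  unfolding qpoch_def
proof (rule prod_pos)
  fix j assume "j \<in> {..<k}"
  show "0 < 1 - q * q ^ j" using qq_lt1[OF assms, of j] by simp
qed

lemma qpoch_conv:
  assumes "0 < (q::real)" "q < 1"
  shows "convergent_prod (\<lambda>j. 1 - q * q ^ j)"
proof -
  have "summable (\<lambda>j. q * q ^ j)"
  proof -
    have "summable (\<lambda>j. q ^ j)" using summable_geometric[of q] assms by simp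
    then show ?thesis by (rule summable_mult)
  qed
  then have "summable (\<lambda>j. norm ((1 - q * q ^ j) - 1))"
    using assms by simp
  then show ?thesis
    by (intro abs_convergent_prod_imp_convergent_prod summable_imp_abs_convergent_prod)
qed

lemma qpoch_dec:
  assumes "0 < q" "q < 1"
  shows "decseq (\<lambda>n. qpoch q q n)"
proof (rule decseq_SucI)
  fix n
  have "0 < qpoch q q n" using qpoch_pos assms by blast
  moreover have "0 \<le> q * q ^ n" using assms by simp
  ultimately show "qpoch q q (Suc n) \<le> qpoch q q n"
    unfolding qpoch_def by (simp add: mult_le_cancel_left1)
qed

lemma qpoch_inf_props:
  assumes "0 < q" "q < 1"
  shows "qpoch_inf q q > 0" "qpoch_inf q q \<le> qpoch q q m"
proof -
  have L: "(\<lambda>n. qpoch q q (Suc n)) \<longlonglongrightarrow> qpoch_inf q q"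
    using convergent_prod_LIMSEQ[OF qpoch_conv[OF assms]]
    unfolding qpoch_def qpoch_inf_def lessThan_Suc_atMost .
  have "qpoch_inf q q \<noteq> 0"
    unfolding qpoch_inf_def
  proof (rule prodinf_nonzero[OF qpoch_conv[OF assms]])
    fix i
    show "1 - q * q ^ i \<noteq> 0" using qq_lt1[OF assms, of i] by simp
  qed
  moreover have "0 \<le> qpoch_inf q q"
    using L by (rule LIMSEQ_le_const) (use qpoch_pos[OF assms] less_imp_le in blast)
  ultimately show "qpoch_inf q q > 0" by simp
  show "qpoch_inf q q \<le> qpoch q q m"
    using L
  proof (rule LIMSEQ_le_const2)
    show "\<exists>N. \<forall>n\<ge>N. qpoch q q (Suc n) \<le> qpoch q q m"
      using qpoch_dec[OF assms] unfolding decseq_def by (intro exI[of _ m]) auto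
  qed
qed

lemma A_summable:
  assumes "0 < q" "q < 1" "0 \<le> w"
  shows "summable (\<lambda>k. q ^ (k\<^sup>2) / qpoch q q k * w ^ k)"
proof -
  define Q where "Q = qpoch_inf q q"
  have Q: "Q > 0" "\<And>m. Q \<le> qpoch q q m" using qpoch_inf_props[OF assms(1,2)] Q_def by auto
  have "(\<lambda>k. w * q ^ k) \<longlonglongrightarrow> w * 0"
    using assms by (intro tendsto_mult tendsto_const LIMSEQ_power_zero) auto
  then have "eventually (\<lambda>k. w * q ^ k < 1/2) sequentially"
    by (intro order_tendstoD) auto
  then have ev: "eventually (\<lambda>k. norm (q ^ (k\<^sup>2) / qpoch q q k * w ^ k) \<le> (1/Q) * (1/2) ^ k) sequentially"
  proof eventually_elim
    case (elim k)
    have qk: "0 < qpoch q q k" using qpoch_pos assms by blast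
    have eq: "q ^ (k\<^sup>2) * w ^ k = (w * q ^ k) ^ k"
      by (simp add: power2_eq_square power_mult power_mult_distrib mult.commute)
    have nn: "0 \<le> q ^ (k\<^sup>2) / qpoch q q k * w ^ k" using assms qk by simp
    have "q ^ (k\<^sup>2) / qpoch q q k * w ^ k = (w * q ^ k) ^ k / qpoch q q k"
      using eq by simp
    also have "\<dots> \<le> (w * q ^ k) ^ k / Q"
      using Q qk assms by (intro divide_left_mono) auto
    also have "\<dots> \<le> (1/2) ^ k / Q"
      using Q assms elim by (intro divide_right_mono power_mono) auto
    finally show ?case using nn by simp
  qed
  show ?thesis
    by (rule summable_comparison_test_ev[OF ev]) (intro summable_mult summable_geometric, simp)
qed

theorem mainTheorem2:
  fixes q t :: real and n :: nat and u :: complex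
  assumes "0 < q" "q < 1" "0 < t" "u \<noteq> 0"
  shows "cmod (stieltjes_wigert n (of_real (q powr (- (real n * t))) * u) q)
         \<le> cmod u ^ n * ramanujanA q (- (q powr (real n * (t - 2)) / cmod u))
           / (qpoch_inf q q * q powr ((real n)\<^sup>2 * (t - 1)))"
proof -
  define c where "c = q powr (- (real n * t))"
  define p where "p = q powr (real n * (t - 2))"
  define a where "a = cmod u"
  define w where "w = p / a"
  define Q where "Q = qpoch_inf q q"
  define D where "D = q powr ((real n)\<^sup>2 * (t - 1))"
  define h where "h = (\<lambda>k. q ^ (k\<^sup>2) / qpoch q q k * w ^ k)"
  define g where "g = (\<lambda>k. q ^ (k\<^sup>2) / (qpoch q q k * qpoch q q (n - k)) * (c * a) ^ k)"
  have a: "a > 0" using assms a_def by simp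
  have c: "c > 0" using assms c_def by simp
  have p: "p > 0" using assms p_def by simp
  have w: "w > 0" using a p w_def by simp
  have D: "D > 0" using assms D_def by simp
  have Q: "Q > 0" "\<And>m. Q \<le> qpoch q q m" using qpoch_inf_props[OF assms(1,2)] Q_def by auto
  have qk: "\<And>k. qpoch q q k > 0" using qpoch_pos assms by blast
  have hs: "summable h" unfolding h_def using A_summable[OF assms(1,2)] w by simp
  have hnn: "\<And>k. 0 \<le> h k" unfolding h_def using qk w assms
    by (intro mult_nonneg_nonneg divide_nonneg_pos) auto
  have Aeq: "ramanujanA q (- (q powr (real n * (t - 2)) / a)) = suminf h"
    unfolding ramanujanA_def h_def w_def p_def a_def by simp
  have "cmod (stieltjes_wigert n (of_real c * u) q) \<le> (\<Sum>k=0..n. g k)"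
    unfolding stieltjes_wigert_def
  proof (rule order_trans[OF norm_sum sum_mono])
    fix k assume "k \<in> {0..n}"
    have "0 < qpoch q q k" "0 < qpoch q q (n - k)" using qk by auto
    then show "cmod (complex_of_real (q ^ k\<^sup>2 / (qpoch q q k * qpoch q q (n - k))) * (- (complex_of_real c * u)) ^ k) \<le> g k"
      unfolding g_def a_def using c assms
      by (simp add: norm_mult norm_power norm_divide abs_mult)
  qed
  also have "(\<Sum>k=0..n. g k) = (\<Sum>j=0..n. g (n - j))"
    by (subst sum.atLeastAtMost_rev) simp
  also have "\<dots> \<le> (\<Sum>j=0..n. a ^ n / (Q * D) * h j)"
  proof (rule sum_mono)
    fix j assume j: "j \<in> {0..n}"
    define k where "k = n - j"
    have nk: "n - k = j" using j k_def by auto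
    have qpart: "q ^ (k\<^sup>2) * c ^ k * D = q ^ (j\<^sup>2) * p ^ j"
    proof -
      have e1: "q ^ (k\<^sup>2) = q powr (real k ^ 2)"
        using assms powr_realpow[of q "k^2"] by simp
      have e2: "c ^ k = q powr (real k * (- (real n * t)))"
        using assms unfolding c_def by (simp add: powr_power)
      have "q ^ (k\<^sup>2) * c ^ k * D = q powr (real k ^ 2) * q powr (real k * (- (real n * t))) * q powr ((real n)\<^sup>2 * (t - 1))"
        unfolding e1 e2 D_def ..
      also have "\<dots> = q powr (real k ^ 2 + real k * (- (real n * t)) + (real n)\<^sup>2 * (t - 1))"
        by (simp only: powr_add)
      also have "real k ^ 2 + real k * (- (real n * t)) + (real n)\<^sup>2 * (t - 1) = real j ^ 2 + real j * (real n * (t - 2))"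
        using j unfolding k_def by (simp add: of_nat_diff power2_eq_square algebra_simps)
      also have "q powr (real j ^ 2 + real j * (real n * (t - 2))) = q ^ (j\<^sup>2) * p ^ j"
      proof -
        have e3: "q ^ (j\<^sup>2) = q powr (real j ^ 2)"
          using assms powr_realpow[of q "j^2"] by simp
        have e4: "p ^ j = q powr (real j * (real n * (t - 2)))"
          using assms unfolding p_def by (simp add: powr_power)
        show ?thesis unfolding e3 e4 by (simp add: powr_add)
      qed
      finally show ?thesis .
    qed
    have apow: "a ^ k * a ^ j = a ^ n" using j k_def by (simp add: power_add[symmetric])
    have key: "q ^ (k\<^sup>2) * (c * a) ^ k = a ^ n / D * (q ^ (j\<^sup>2) * w ^ j)"
    proof -
      have "q ^ (k\<^sup>2) * (c * a) ^ k = (q ^ (k\<^sup>2) * c ^ k * D) * a ^ k / D"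
        using D by (simp add: power_mult_distrib)
      also have "\<dots> = q ^ (j\<^sup>2) * p ^ j * a ^ k / D" using qpart by simp
      also have "p ^ j = w ^ j * a ^ j" using a unfolding w_def by (simp add: power_divide)
      finally show ?thesis using apow by (simp add: algebra_simps)
    qed
    have "g (n - j) = q ^ (k\<^sup>2) * (c * a) ^ k / (qpoch q q k * qpoch q q j)"
      unfolding g_def k_def[symmetric] nk by simp
    also have "\<dots> \<le> q ^ (k\<^sup>2) * (c * a) ^ k / (Q * qpoch q q j)"
      using Q qk a c assms by (intro divide_left_mono mult_right_mono mult_pos_pos) (auto intro: less_imp_le)
    also have "\<dots> = a ^ n / (Q * D) * h j"
      unfolding key h_def by simp
    finally show "g (n - j) \<le> a ^ n / (Q * D) * h j" .
  qed
  also have "\<dots> = a ^ n / (Q * D) * (\<Sum>j=0..n. h j)"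
    by (simp add: sum_distrib_left)
  also have "\<dots> \<le> a ^ n / (Q * D) * suminf h"
    using a Q D hs hnn
    by (intro mult_left_mono sum_le_suminf) auto
  finally show ?thesis
    unfolding Aeq c_def[symmetric] a_def[symmetric] Q_def[symmetric] D_def[symmetric]
    by simp
qed

end
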